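(* Let $k$ be an infinite field, $<$ a term order on $k[X_1,\ldots,X_n]$ with $X_1<\cdots<X_n$, and $A\subseteq k^n$ a finite union of pairwise distinct affine $d$-planes. For each $J\subseteq\{1,\ldots,n\}$ with $\#J=d$, let $A_J$ be the union of those irreducible components of $A$ whose minimal free variables are $\{X_j;\ j\in J\}$, and let $m_J$ be their number. Assume that for every such $J$, every $d$-plane contained in $D(A_J)$ is parallel to $\bigoplus_{j\in J}\mathbb{N}e_j$ and the number of these $d$-planes is $m_J$. Then the union $E(A)$ of all $d$-planes contained in $D(A)$ equals $\bigcup_J E(A_J)$, where $E(A_J)$ is the union of all $d$-planes contained in $D(A_J)$; consequently, for every $J$ with $\#J=d$, the number of $d$-planes in $D(A)$ parallel to $\bigoplus_{j\in J}\mathbb{N}e_j$ equals $m_J$.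
   Context: $I(A)$ is the ideal of polynomials vanishing on $A\subseteq k^n$ (with $I(\emptyset)=k[X]$); ${\rm LE}(f)$ is the exponent of the leading monomial of $f\neq0$ w.r.t. $<$; $C(A)=\{{\rm LE}(f);\ 0\neq f\in I(A)\}$, $D(A)=\mathbb{N}^n\setminus C(A)$. A $d$-plane in $\delta\subseteq\mathbb{N}^n$ is a subset of $\delta$ of the form $\gamma+\bigoplus_{j\in J}\mathbb{N}e_j$ with $\#J=d$ and $\gamma_j=0$ for $j\in J$, said to be parallel to $\bigoplus_{j\in J}\mathbb{N}e_j$. An affine $d$-plane is a translate of a $d$-dimensional linear subspace of $k^n$. $\{X_j;\ j\in J\}$ ($\#J=d$) is a set of free variables of an affine $d$-plane $A'$ if the coordinate projection $A'\to k^J$ is bijective; these are the minimal free variables of $A'$ if moreover for no $j\in J$ and $i\notin J$ with $i<j$ is $\{X_j;\ j\in(J\setminus\{j\})\cup\{i\}\}$ a set of free variables of $A'$. *)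

theory Defs
  imports Main "HOL-Library.Poly_Mapping" "HOL-Library.FuncSet"
begin

text \<open>Variables X_1..X_n are indexed by 0..n-1. Monomials/exponents are finitely
supported functions nat =>0 nat with support in {..<n}; polynomials in k[X] are
finitely supported functions from monomials to coefficients. Points of k^n are
functions nat => k vanishing outside {..<n}.\<close>

type_synonym mono = "nat \<Rightarrow>\<^sub>0 nat"
type_synonym 'k mpoly = "mono \<Rightarrow>\<^sub>0 'k"

definition monoms :: "nat \<Rightarrow> mono set" where
  "monoms n = {m. Poly_Mapping.keys m \<subseteq> {..<n}}"

definition polys :: "nat \<Rightarrow> ('k::zero) mpoly set" where
  "polys n = {p. \<forall>m\<in>Poly_Mapping.keys p. m \<in> monoms n}"

definition points :: "nat \<Rightarrow> (nat \<Rightarrow> 'k::zero) set" where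
  "points n = {x. \<forall>i\<ge>n. x i = 0}"

definition eval :: "('k::comm_semiring_1) mpoly \<Rightarrow> (nat \<Rightarrow> 'k) \<Rightarrow> 'k" where
  "eval p x = (\<Sum>m\<in>Poly_Mapping.keys p. Poly_Mapping.lookup p m * (\<Prod>i\<in>Poly_Mapping.keys m. x i ^ Poly_Mapping.lookup m i))"

definition term_order :: "nat \<Rightarrow> (mono \<Rightarrow> mono \<Rightarrow> bool) \<Rightarrow> bool" where
  "term_order n ord \<longleftrightarrow>
     (\<forall>a\<in>monoms n. \<not> ord a a) \<and>
     (\<forall>a\<in>monoms n. \<forall>b\<in>monoms n. \<forall>c\<in>monoms n. ord a b \<longrightarrow> ord b c \<longrightarrow> ord a c) \<and>
     (\<forall>a\<in>monoms n. \<forall>b\<in>monoms n. a \<noteq> b \<longrightarrow> ord a b \<or> ord b a) \<and>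
     (\<forall>a\<in>monoms n. \<forall>b\<in>monoms n. \<forall>c\<in>monoms n. ord a b \<longrightarrow> ord (a + c) (b + c)) \<and>
     (\<forall>a\<in>monoms n. a \<noteq> 0 \<longrightarrow> ord 0 a)"

definition LE :: "(mono \<Rightarrow> mono \<Rightarrow> bool) \<Rightarrow> ('k::zero) mpoly \<Rightarrow> mono" where
  "LE ord p = (THE m. m \<in> Poly_Mapping.keys p \<and> (\<forall>m'\<in>Poly_Mapping.keys p. m' \<noteq> m \<longrightarrow> ord m' m))"

definition vanishing_ideal :: "nat \<Rightarrow> (nat \<Rightarrow> 'k::comm_semiring_1) set \<Rightarrow> 'k mpoly set" where
  "vanishing_ideal n A = {p \<in> polys n. \<forall>x\<in>A. eval p x = 0}"

definition Cset :: "nat \<Rightarrow> (mono \<Rightarrow> mono \<Rightarrow> bool) \<Rightarrow> (nat \<Rightarrow> 'k::comm_semiring_1) set \<Rightarrow> mono set" where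
  "Cset n ord A = {LE ord f | f. f \<noteq> 0 \<and> f \<in> vanishing_ideal n A}"

definition Dset :: "nat \<Rightarrow> (mono \<Rightarrow> mono \<Rightarrow> bool) \<Rightarrow> (nat \<Rightarrow> 'k::comm_semiring_1) set \<Rightarrow> mono set" where
  "Dset n ord A = monoms n - Cset n ord A"

definition is_dplane_in :: "nat \<Rightarrow> nat \<Rightarrow> mono set \<Rightarrow> nat set \<Rightarrow> mono set \<Rightarrow> bool" where
  "is_dplane_in n d \<delta> J P \<longleftrightarrow> J \<subseteq> {..<n} \<and> card J = d \<and> P \<subseteq> \<delta> \<and>
     (\<exists>\<gamma>\<in>monoms n. (\<forall>j\<in>J. Poly_Mapping.lookup \<gamma> j = 0) \<and> P = {\<gamma> + m | m. Poly_Mapping.keys m \<subseteq> J})"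

definition Eset :: "nat \<Rightarrow> nat \<Rightarrow> mono set \<Rightarrow> mono set" where
  "Eset n d \<delta> = \<Union>{P. \<exists>J. is_dplane_in n d \<delta> J P}"

definition affine_dplane :: "nat \<Rightarrow> nat \<Rightarrow> (nat \<Rightarrow> 'k::field) set \<Rightarrow> bool" where
  "affine_dplane n d S \<longleftrightarrow>
     (\<exists>p v. p \<in> points n \<and> (\<forall>i<d. v i \<in> points n) \<and>
        (\<forall>t. (\<forall>j. (\<Sum>i<d. t i * v i j) = 0) \<longrightarrow> (\<forall>i<d. t i = 0)) \<and>
        S = {(\<lambda>j. p j + (\<Sum>i<d. t i * v i j)) | t. True})"

definition free_vars :: "nat \<Rightarrow> nat \<Rightarrow> (nat \<Rightarrow> 'k::field) set \<Rightarrow> nat set \<Rightarrow> bool" where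
  "free_vars n d S J \<longleftrightarrow> J \<subseteq> {..<n} \<and> card J = d \<and>
     bij_betw (\<lambda>x. restrict x J) S (J \<rightarrow>\<^sub>E (UNIV :: 'k set))"

definition minimal_free_vars :: "nat \<Rightarrow> nat \<Rightarrow> (nat \<Rightarrow> 'k::field) set \<Rightarrow> nat set \<Rightarrow> bool" where
  "minimal_free_vars n d S J \<longleftrightarrow> free_vars n d S J \<and>
     \<not> (\<exists>j\<in>J. \<exists>i\<in>{..<n} - J. i < j \<and> free_vars n d S ((J - {j}) \<union> {i}))"

end

theory Submission
  imports Defs "HOL-Library.Function_Algebras" "HOL.Vector_Spaces"
begin


definition mdeg :: "mono \<Rightarrow> nat" where
  "mdeg a = sum (Poly_Mapping.lookup a) (Poly_Mapping.keys a)"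

lemma mdeg_superset:
  assumes "finite K" "Poly_Mapping.keys a \<subseteq> K"
  shows "mdeg a = sum (Poly_Mapping.lookup a) K"
  unfolding mdeg_def
  by (rule sum.mono_neutral_left) (use assms in \<open>auto simp: in_keys_iff\<close>)

lemma mdeg_add: "mdeg (a + b) = mdeg a + mdeg b"
proof -
  let ?K = "Poly_Mapping.keys a \<union> Poly_Mapping.keys b"
  have "mdeg (a + b) = sum (Poly_Mapping.lookup (a+b)) ?K"
    by (rule mdeg_superset) (auto simp: keys_add)
  also have "\<dots> = sum (Poly_Mapping.lookup a) ?K + sum (Poly_Mapping.lookup b) ?K"
    by (simp add: lookup_add sum.distrib)
  also have "\<dots> = mdeg a + mdeg b"
    by (simp add: mdeg_superset[of ?K a] mdeg_superset[of ?K b])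
  finally show ?thesis .
qed

lemma mdeg_single[simp]: "mdeg (Poly_Mapping.single i k) = k"
  by (cases "k = 0") (auto simp: mdeg_def)

lemma mdeg_zero[simp]: "mdeg 0 = 0"
  by (simp add: mdeg_def)

lemma mdeg_eq_0: "mdeg a = 0 \<longleftrightarrow> a = 0"
  by (auto simp: mdeg_def in_keys_iff poly_mapping_eqI)

lemma lookup_le_mdeg: "Poly_Mapping.lookup a j \<le> mdeg a"
proof (cases "j \<in> Poly_Mapping.keys a")
  case True
  then show ?thesis unfolding mdeg_def by (intro member_le_sum) auto
next
  case False then show ?thesis by (simp add: in_keys_iff)
qed

definition Tset :: "nat set \<Rightarrow> nat \<Rightarrow> mono set" where
  "Tset J s = {m. Poly_Mapping.keys m \<subseteq> J \<and> mdeg m \<le> s}"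

lemma Tset_empty: "Tset {} s = {0}"
  by (auto simp: Tset_def)

lemma Tset_0: "Tset J 0 = {0}"
  by (auto simp: Tset_def mdeg_eq_0)

lemma Tset_insert_Suc:
  assumes "j \<notin> J"
  shows "Tset (insert j J) (Suc s) = Tset J (Suc s) \<union> (\<lambda>m. m + Poly_Mapping.single j 1) ` Tset (insert j J) s"
proof (intro equalityI subsetI)
  fix m assume m: "m \<in> Tset (insert j J) (Suc s)"
  show "m \<in> Tset J (Suc s) \<union> (\<lambda>m. m + Poly_Mapping.single j 1) ` Tset (insert j J) s"
  proof (cases "Poly_Mapping.lookup m j = 0")
    case True
    then have "Poly_Mapping.keys m \<subseteq> J" using m by (auto simp: Tset_def in_keys_iff)
    then show ?thesis using m by (auto simp: Tset_def)
  next
    case False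
    define m' where "m' = m - Poly_Mapping.single j 1"
    have eq: "m = m' + Poly_Mapping.single j 1"
      using False by (intro poly_mapping_eqI) (auto simp: m'_def lookup_add lookup_minus lookup_single when_def)
    have "Poly_Mapping.keys m' \<subseteq> Poly_Mapping.keys m"
      by (auto simp: m'_def in_keys_iff lookup_minus)
    then have "Poly_Mapping.keys m' \<subseteq> insert j J"
      using m by (auto simp: Tset_def)
    moreover have "mdeg m' \<le> s" using m eq by (simp add: Tset_def mdeg_add)
    ultimately show ?thesis using eq by (auto simp: Tset_def)
  qed
next
  fix m assume "m \<in> Tset J (Suc s) \<union> (\<lambda>m. m + Poly_Mapping.single j 1) ` Tset (insert j J) s"
  then show "m \<in> Tset (insert j J) (Suc s)"
    using keys_add[of _ "Poly_Mapping.single j (1::nat)"]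
    by (auto simp: Tset_def mdeg_add)
qed

lemma Tset_card:
  assumes "finite J"
  shows "finite (Tset J s) \<and> card (Tset J s) = (s + card J) choose card J"
  using assms
proof (induction J arbitrary: s rule: finite_induct)
  case empty then show ?case by (simp add: Tset_empty)
next
  case (insert j J)
  show ?case
  proof (induction s)
    case 0 then show ?case by (simp add: Tset_0)
  next
    case (Suc s)
    have disj: "Tset J (Suc s) \<inter> (\<lambda>m. m + Poly_Mapping.single j 1) ` Tset (insert j J) s = {}"
    proof -
      have "j \<in> Poly_Mapping.keys (m + Poly_Mapping.single j (1::nat))" for m
        by (simp add: in_keys_iff lookup_add)
      then show ?thesis using insert.hyps(2) by (auto simp: Tset_def)
    qed
    have inj: "inj_on (\<lambda>m. m + Poly_Mapping.single j (1::nat)) (Tset (insert j J) s)"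
      by (intro inj_onI) simp
    have "card (Tset (insert j J) (Suc s)) = card (Tset J (Suc s)) + card (Tset (insert j J) s)"
      unfolding Tset_insert_Suc[OF insert.hyps(2)]
      using insert.IH Suc.IH disj inj by (simp add: card_Un_disjoint card_image)
    also have "\<dots> = (Suc s + card (insert j J)) choose card (insert j J)"
      using insert.IH Suc.IH insert.hyps by simp
    finally show ?case
      unfolding Tset_insert_Suc[OF insert.hyps(2)] using insert.IH Suc.IH by simp
  qed
qed



lemma binom_diff:
  "(u + G + Suc e) choose Suc e \<le> ((u + Suc e) choose Suc e) + G * ((u + G + e) choose e)"
proof (induction G)
  case 0 then show ?case by simp
next
  case (Suc G)
  have "(u + Suc G + Suc e) choose Suc e = ((u + G + Suc e) choose Suc e) + ((u + G + Suc e) choose e)"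
  proof -
    have "u + Suc G + Suc e = Suc (u + G + Suc e)" by simp
    then show ?thesis using binomial_Suc_Suc[of "u + G + Suc e" e] by simp
  qed
  moreover have "(u + G + e) choose e \<le> (u + Suc G + e) choose e"
    by (intro binomial_right_mono) simp
  moreover have "(u + G + Suc e) = u + Suc G + e" by simp
  ultimately have "(u + Suc G + Suc e) choose Suc e \<le> ((u + Suc e) choose Suc e) + G * ((u + G + e) choose e) + ((u + Suc G + e) choose e)"
    using Suc.IH by simp
  also have "\<dots> \<le> ((u + Suc e) choose Suc e) + G * ((u + Suc G + e) choose e) + ((u + Suc G + e) choose e)"
    using \<open>(u + G + e) choose e \<le> (u + Suc G + e) choose e\<close> by simp
  finally show ?case by simp
qed

lemma arith_key:
  fixes p G d :: nat
  defines "s \<equiv> Suc p * G * d + G"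
  shows "G \<le> s \<and> p * ((s + d) choose d) < Suc p * ((s - G + d) choose d)"
proof (cases d)
  case 0 then show ?thesis by (simp add: s_def)
next
  case (Suc e)
  define u where "u = Suc p * G * d"
  have su: "s = u + G" by (simp add: s_def u_def)
  define a where "a = (s + d) choose d"
  define b where "b = (s - G + d) choose d"
  define c where "c = (s + e) choose e"
  have ab: "a \<le> b + G * c"
    using binom_diff[of u G e] by (simp add: a_def b_def c_def su Suc add.commute add.left_commute)
  have da: "d * a = (s + d) * c"
    using Suc_times_binomial[of e "s + e"] by (simp add: a_def c_def Suc)
  have c0: "c > 0" by (simp add: c_def)
  have "p * a < Suc p * b"
  proof (rule ccontr)
    assume "\<not> ?thesis"
    then have h: "Suc p * b \<le> p * a" by simp
    have "Suc p * a \<le> Suc p * b + Suc p * G * c"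
      using ab by (metis add_mult_distrib2 mult.assoc mult_le_mono2)
    then have "a \<le> Suc p * G * c" using h by simp
    then have l: "d * a \<le> d * (Suc p * G * c)" by simp
    have "(s + d) * c \<le> (Suc p * G * d) * c"
    proof -
      have "(s+d)*c = d*a" using da by simp
      also have "\<dots> \<le> d * (Suc p*G*c)" by (fact l)
      also have "\<dots> = (Suc p*G*d)*c" by (simp add: ac_simps)
      finally show ?thesis .
    qed
    then have "s + d \<le> Suc p * G * d" using c0 by simp
    then show False using Suc by (simp add: s_def)
  qed
  moreover have "G \<le> s" unfolding s_def by simp
  ultimately show ?thesis unfolding a_def b_def by blast
qed



lemma LA:
  fixes v :: "nat \<Rightarrow> nat \<Rightarrow> 'k::field"
  assumes "\<forall>i<d. \<forall>j\<ge>n. v i j = 0"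
    and "\<forall>t. (\<forall>j. (\<Sum>i<d. t i * v i j) = 0) \<longrightarrow> (\<forall>i<d. t i = 0)"
  shows "\<exists>J. J \<subseteq> {..<n} \<and> card J = d \<and> (\<forall>y. \<exists>t. \<forall>j\<in>J. (\<Sum>i<d. t i * v i j) = y j) \<and>
     (\<forall>t. (\<forall>j\<in>J. (\<Sum>i<d. t i * v i j) = 0) \<longrightarrow> (\<forall>i<d. t i = 0))"
  using assms
proof (induction d arbitrary: v)
  case 0
  then show ?case by (intro exI[of _ "{}"]) auto
next
  case (Suc d)
  have ex: "\<exists>j0. v d j0 \<noteq> 0"
  proof (rule ccontr)
    assume "\<not> ?thesis"
    then have z: "\<forall>j. v d j = 0" by auto
    let ?t = "\<lambda>i. if i = d then (1::'k) else 0"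
    have h2: "\<forall>j. (\<Sum>i<Suc d. ?t i * v i j) = 0" using z by simp
    from Suc.prems(2) have "(\<forall>j. (\<Sum>i<Suc d. ?t i * v i j) = 0) \<longrightarrow> (\<forall>i<Suc d. ?t i = 0)" by (rule spec)
    with h2 have "\<forall>i<Suc d. ?t i = 0" by blast
    then show False by auto
  qed
  then obtain j0 where j0: "v d j0 \<noteq> 0" by blast
  then have j0n: "j0 < n" using Suc.prems(1) by (meson lessI not_le)
  define c where "c i = v i j0 / v d j0" for i
  define w where "w i j = v i j - c i * v d j" for i j
  have key: "(\<Sum>i<Suc d. t i * v i j) = (\<Sum>i<d. t i * w i j) + (t d + (\<Sum>i<d. t i * c i)) * v d j" for t j
  proof -
    have "(\<Sum>i<d. t i * w i j) = (\<Sum>i<d. t i * v i j) - (\<Sum>i<d. t i * c i) * v d j"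
      by (simp add: w_def right_diff_distrib sum_subtractf sum_distrib_right mult.assoc)
    then show ?thesis by (simp add: algebra_simps)
  qed
  have wj0: "w i j0 = 0" for i using j0 by (simp add: w_def c_def)
  have wsupp: "\<forall>i<d. \<forall>j\<ge>n. w i j = 0" using Suc.prems(1) by (simp add: w_def)
  have windep: "\<forall>t. (\<forall>j. (\<Sum>i<d. t i * w i j) = 0) \<longrightarrow> (\<forall>i<d. t i = 0)"
  proof (rule allI, rule impI)
    fix t :: "nat \<Rightarrow> 'k" assume h: "\<forall>j. (\<Sum>i<d. t i * w i j) = 0"
    define t' where "t' = t(d := - (\<Sum>i<d. t i * c i))"
    have s1: "(\<Sum>i<d. t' i * f i) = (\<Sum>i<d. t i * f i)" for f :: "nat \<Rightarrow> 'k"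
      by (rule sum.cong) (auto simp: t'_def)
    have "\<forall>j. (\<Sum>i<Suc d. t' i * v i j) = 0"
      unfolding key s1 using h by (simp add: t'_def)
    then have a: "\<forall>i<Suc d. t' i = 0" using Suc.prems(2) by blast
    show "\<forall>i<d. t i = 0"
    proof (intro allI impI)
      fix i assume i: "i < d"
      then have "t' i = 0" using a by simp
      then show "t i = 0" using i by (simp add: t'_def)
    qed
  qed
  have "\<exists>J. J \<subseteq> {..<n} \<and> card J = d \<and> (\<forall>y. \<exists>t. \<forall>j\<in>J. (\<Sum>i<d. t i * w i j) = y j) \<and>
     (\<forall>t. (\<forall>j\<in>J. (\<Sum>i<d. t i * w i j) = 0) \<longrightarrow> (\<forall>i<d. t i = 0))"
    by (rule Suc.IH[OF wsupp windep])
  then obtain J' where J': "J' \<subseteq> {..<n}" "card J' = d"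
    "\<forall>y. \<exists>t. \<forall>j\<in>J'. (\<Sum>i<d. t i * w i j) = y j"
    "\<forall>t. (\<forall>j\<in>J'. (\<Sum>i<d. t i * w i j) = 0) \<longrightarrow> (\<forall>i<d. t i = 0)"
    by (elim exE conjE) blast
  have j0J': "j0 \<notin> J'"
  proof
    assume "j0 \<in> J'"
    from J'(3) have "\<exists>t. \<forall>j\<in>J'. (\<Sum>i<d. t i * w i j) = (\<lambda>_. 1) j" by (rule spec)
    then obtain t where "\<forall>j\<in>J'. (\<Sum>i<d. t i * w i j) = (\<lambda>_. 1) j" by blast
    then have "(\<Sum>i<d. t i * w i j0) = 1" using \<open>j0 \<in> J'\<close> by blast
    then show False by (simp add: wj0)
  qed
  have finJ': "finite J'" using J'(1) finite_subset by blast
  show ?case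
  proof (intro exI[of _ "insert j0 J'"] conjI allI impI)
    show "insert j0 J' \<subseteq> {..<n}" using J'(1) j0n by auto
    show "card (insert j0 J') = Suc d" using finJ' j0J' J'(2) by simp
  next
    fix y :: "nat \<Rightarrow> 'k"
    define u where "u = y j0 / v d j0"
    from J'(3) have "\<exists>t. \<forall>j\<in>J'. (\<Sum>i<d. t i * w i j) = (\<lambda>j. y j - u * v d j) j" by (rule spec)
    then obtain t where t: "\<forall>j\<in>J'. (\<Sum>i<d. t i * w i j) = y j - u * v d j" by blast
    define T where "T = t(d := u - (\<Sum>i<d. t i * c i))"
    have s1: "(\<Sum>i<d. T i * f i) = (\<Sum>i<d. t i * f i)" for f :: "nat \<Rightarrow> 'k"
      by (rule sum.cong) (auto simp: T_def)
    have eq: "(\<Sum>i<Suc d. T i * v i j) = (\<Sum>i<d. t i * w i j) + u * v d j" for j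
      unfolding key s1 by (simp add: T_def)
    show "\<exists>t. \<forall>j\<in>insert j0 J'. (\<Sum>i<Suc d. t i * v i j) = y j"
    proof (intro exI[of _ T] ballI)
      fix j assume j: "j \<in> insert j0 J'"
      show "(\<Sum>i<Suc d. T i * v i j) = y j"
        unfolding eq
      proof (cases "j = j0")
        case True then show "(\<Sum>i<d. t i * w i j) + u * v d j = y j" using j0 by (simp add: wj0 u_def)
      next
        case False then have "j \<in> J'" using j by simp
        then show "(\<Sum>i<d. t i * w i j) + u * v d j = y j" using t by simp
      qed
    qed
  next
    fix t :: "nat \<Rightarrow> 'k" and i
    assume h: "\<forall>j\<in>insert j0 J'. (\<Sum>i<Suc d. t i * v i j) = 0" and i: "i < Suc d"
    define u where "u = t d + (\<Sum>i<d. t i * c i)"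
    have "u * v d j0 = 0" using h key[of t j0] by (simp add: wj0 u_def)
    then have u0: "u = 0" using j0 by simp
    have "\<forall>j\<in>J'. (\<Sum>i<d. t i * w i j) = 0" using h key[of t] u0 by (simp add: u_def)
    then have ti: "\<forall>i<d. t i = 0" using J'(4) by blast
    then have "t d = 0" using u0 by (simp add: u_def)
    then show "t i = 0" using ti i less_Suc_eq by auto
  qed
qed



lemma free_vars_exist:
  fixes S :: "(nat \<Rightarrow> 'k::field) set"
  assumes "affine_dplane n d S"
  shows "\<exists>J. free_vars n d S J"
proof -
  obtain p v where p: "p \<in> points n" and v: "\<forall>i<d. v i \<in> points n"
    and ind: "\<forall>t. (\<forall>j. (\<Sum>i<d. t i * v i j) = 0) \<longrightarrow> (\<forall>i<d. t i = 0)"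
    and S: "S = {(\<lambda>j. p j + (\<Sum>i<d. t i * v i j)) | t. True}"
    using assms unfolding affine_dplane_def by blast
  have supp: "\<forall>i<d. \<forall>j\<ge>n. v i j = 0" using v by (simp add: points_def)
  obtain J where J: "J \<subseteq> {..<n}" "card J = d"
    "\<forall>y. \<exists>t. \<forall>j\<in>J. (\<Sum>i<d. t i * v i j) = y j"
    "\<forall>t. (\<forall>j\<in>J. (\<Sum>i<d. t i * v i j) = 0) \<longrightarrow> (\<forall>i<d. t i = 0)"
    using LA[OF supp ind] by (elim exE conjE) blast
  have "bij_betw (\<lambda>x. restrict x J) S (J \<rightarrow>\<^sub>E (UNIV :: 'k set))"
  proof (rule bij_betw_imageI)
    show "inj_on (\<lambda>x. restrict x J) S"
    proof (rule inj_onI)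
      fix x x' assume "x \<in> S" "x' \<in> S" and eq: "restrict x J = restrict x' J"
      then obtain t t' where x: "x = (\<lambda>j. p j + (\<Sum>i<d. t i * v i j))"
        and x': "x' = (\<lambda>j. p j + (\<Sum>i<d. t' i * v i j))" using S by blast
      have "\<forall>j\<in>J. (\<Sum>i<d. (t i - t' i) * v i j) = 0"
      proof
        fix j assume "j \<in> J"
        then have "x j = x' j" using eq by (metis restrict_apply')
        then show "(\<Sum>i<d. (t i - t' i) * v i j) = 0"
          by (simp add: x x' left_diff_distrib sum_subtractf)
      qed
      moreover from J(4) have "(\<forall>j\<in>J. (\<Sum>i<d. (\<lambda>i. t i - t' i) i * v i j) = 0) \<longrightarrow> (\<forall>i<d. (\<lambda>i. t i - t' i) i = 0)" by (rule spec)
      ultimately have "\<forall>i<d. t i - t' i = 0" by simp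
      then have "\<forall>i<d. t i = t' i" by simp
      then show "x = x'" unfolding x x' by (intro ext sum.cong arg_cong2[where f="(+)"]) auto
    qed
  next
    show "(\<lambda>x. restrict x J) ` S = J \<rightarrow>\<^sub>E UNIV"
    proof (intro equalityI subsetI)
      fix y assume "y \<in> (\<lambda>x. restrict x J) ` S"
      then show "y \<in> J \<rightarrow>\<^sub>E UNIV" by auto
    next
      fix y :: "nat \<Rightarrow> 'k" assume y: "y \<in> J \<rightarrow>\<^sub>E UNIV"
      from J(3) have "\<exists>t. \<forall>j\<in>J. (\<Sum>i<d. t i * v i j) = (\<lambda>j. y j - p j) j" by (rule spec)
      then obtain t where t: "\<forall>j\<in>J. (\<Sum>i<d. t i * v i j) = y j - p j" by blast
      let ?x = "\<lambda>j. p j + (\<Sum>i<d. t i * v i j)"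
      have "?x \<in> S" using S by blast
      moreover have "restrict ?x J = y"
      proof
        fix j show "restrict ?x J j = y j"
          using t y by (cases "j \<in> J") (auto simp: PiE_def extensional_def)
      qed
      ultimately show "y \<in> (\<lambda>x. restrict x J) ` S" by blast
    qed
  qed
  then show ?thesis using J unfolding free_vars_def by blast
qed

lemma minimal_free_vars_exist:
  fixes S :: "(nat \<Rightarrow> 'k::field) set"
  assumes "affine_dplane n d S"
  shows "\<exists>J. minimal_free_vars n d S J"
proof -
  obtain J0 where "free_vars n d S J0" using free_vars_exist[OF assms] by blast
  then obtain J where J: "free_vars n d S J" and least: "\<forall>J'. free_vars n d S J' \<longrightarrow> sum id J \<le> sum id J'"
    using ex_has_least_nat[of "free_vars n d S" J0 "sum id"] by blast
  have finJ: "finite J" using J unfolding free_vars_def using finite_subset by blast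
  have "\<not> (\<exists>j\<in>J. \<exists>i\<in>{..<n} - J. i < j \<and> free_vars n d S ((J - {j}) \<union> {i}))"
  proof
    assume "\<exists>j\<in>J. \<exists>i\<in>{..<n} - J. i < j \<and> free_vars n d S ((J - {j}) \<union> {i})"
    then obtain j i where j: "j \<in> J" and i: "i \<notin> J" "i < j" and f: "free_vars n d S ((J - {j}) \<union> {i})"
      by blast
    have "sum id ((J - {j}) \<union> {i}) = sum id (J - {j}) + i"
      using finJ i by (simp add: sum.insert)
    also have "sum id J = sum id (J - {j}) + j"
      using finJ j by (simp add: sum.remove)
    ultimately have "sum id ((J - {j}) \<union> {i}) < sum id J" using i by simp
    then show False using least f by fastforce
  qed
  then show ?thesis using J unfolding minimal_free_vars_def by blast
qed



global_interpretation fvs: vector_space "\<lambda>(c::'k::field) (f::'a \<Rightarrow> 'k). \<lambda>x. c * f x"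
  by unfold_locales (auto simp: fun_eq_iff algebra_simps)

lemma sum_apply_fun: "(sum f A) x = sum (\<lambda>a. f a x) A"
  by (induction A rule: infinite_finite_induct) auto

lemma fvs_subspace_lin:
  fixes L :: "('a \<Rightarrow> 'k::field) \<Rightarrow> ('b \<Rightarrow> 'k)"
  assumes "\<And>x y. L (x + y) = L x + L y" "\<And>c x. L (\<lambda>z. c * x z) = (\<lambda>z. c * L x z)" "L 0 = 0"
  shows "fvs.subspace {x. L x \<in> fvs.span T}"
  unfolding fvs.subspace_def
  using assms fvs.span_zero fvs.span_add fvs.span_scale by auto

definition mon :: "mono \<Rightarrow> (nat \<Rightarrow> 'k::comm_semiring_1) \<Rightarrow> 'k" where
  "mon a x = (\<Prod>i\<in>Poly_Mapping.keys a. x i ^ Poly_Mapping.lookup a i)"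

lemma eval_mon: "eval p x = (\<Sum>m\<in>Poly_Mapping.keys p. Poly_Mapping.lookup p m * mon m x)"
  by (simp add: eval_def mon_def)

lemma mon_superset:
  assumes "finite K" "Poly_Mapping.keys a \<subseteq> K"
  shows "mon a x = (\<Prod>i\<in>K. x i ^ Poly_Mapping.lookup a i)"
  unfolding mon_def
  by (rule prod.mono_neutral_left) (use assms in \<open>auto simp: in_keys_iff\<close>)

lemma mon_zero[simp]: "mon 0 x = 1"
  by (simp add: mon_def)

lemma mon_add_single: "mon (a + Poly_Mapping.single i 1) x = mon a x * x i"
proof -
  let ?K = "insert i (Poly_Mapping.keys a)"
  have "mon (a + Poly_Mapping.single i 1) x = (\<Prod>k\<in>?K. x k ^ Poly_Mapping.lookup (a + Poly_Mapping.single i 1) k)"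
    by (rule mon_superset) (use keys_add[of a "Poly_Mapping.single i (1::nat)"] in auto)
  also have "\<dots> = (\<Prod>k\<in>?K. x k ^ Poly_Mapping.lookup a k * (if k = i then x k else 1))"
    by (rule prod.cong) (auto simp: lookup_add lookup_single when_def mult.commute)
  also have "\<dots> = (\<Prod>k\<in>?K. x k ^ Poly_Mapping.lookup a k) * x i"
    by (simp add: prod.distrib)
  also have "\<dots> = mon a x * x i"
    using mon_superset[of ?K a x] by force
  finally show ?thesis .
qed

lemma mdeg_Suc_decomp:
  assumes "mdeg a = Suc k"
  shows "\<exists>i b. a = b + Poly_Mapping.single i 1 \<and> mdeg b = k \<and> Poly_Mapping.keys b \<subseteq> Poly_Mapping.keys a \<and> i \<in> Poly_Mapping.keys a"
proof -
  have "a \<noteq> 0" using assms by auto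
  then obtain i where i: "i \<in> Poly_Mapping.keys a" by (metis keys_zero poly_mapping_eqI lookup_zero not_in_keys_iff_lookup_eq_zero)
  define b where "b = a - Poly_Mapping.single i 1"
  have eq: "a = b + Poly_Mapping.single i 1"
    using i by (intro poly_mapping_eqI) (auto simp: b_def lookup_add lookup_minus lookup_single when_def in_keys_iff)
  have "Poly_Mapping.keys b \<subseteq> Poly_Mapping.keys a"
    by (auto simp: b_def in_keys_iff lookup_minus)
  moreover have "mdeg b = k" using assms eq by (simp add: mdeg_add)
  ultimately show ?thesis using eq i by blast
qed

definition TM :: "nat \<Rightarrow> nat \<Rightarrow> ((nat \<Rightarrow> 'k::comm_semiring_1) \<Rightarrow> 'k) set" where
  "TM d s = (\<lambda>b. mon b) ` Tset {..<d} s"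

lemma TM_mono: "s \<le> s' \<Longrightarrow> TM d s \<subseteq> TM d s'"
  by (auto simp: TM_def Tset_def)

lemma mul_var_span:
  fixes f :: "(nat \<Rightarrow> 'k::field) \<Rightarrow> 'k"
  assumes "f \<in> fvs.span (TM d s)" "k < d"
  shows "(\<lambda>t. f t * t k) \<in> fvs.span (TM d (Suc s))"
  using assms(1)
proof (induction rule: fvs.span_induct)
  case base
  show ?case
    by (rule fvs_subspace_lin) (auto simp: fun_eq_iff algebra_simps)
next
  case (step x)
  then obtain b where b: "b \<in> Tset {..<d} s" "x = mon b" by (auto simp: TM_def)
  have "b + Poly_Mapping.single k 1 \<in> Tset {..<d} (Suc s)"
    using b(1) assms(2) keys_add[of b "Poly_Mapping.single k (1::nat)"] by (auto simp: Tset_def mdeg_add)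
  moreover have "(\<lambda>t. x t * t k) = mon (b + Poly_Mapping.single k 1)"
    by (intro ext) (simp only: b(2) mon_add_single)
  ultimately show ?case by (auto simp: TM_def intro!: fvs.span_base)
qed

lemma mon_param_span:
  fixes p :: "nat \<Rightarrow> 'k::field" and v :: "nat \<Rightarrow> nat \<Rightarrow> 'k"
  shows "(\<lambda>t. mon a (\<lambda>j. p j + (\<Sum>i<d. t i * v i j))) \<in> fvs.span (TM d (mdeg a))"
proof (induction "mdeg a" arbitrary: a)
  case 0
  then have "a = 0" by (simp add: mdeg_eq_0)
  moreover have "(0::mono) \<in> Tset {..<d} 0" by (simp add: Tset_0)
  ultimately show ?case by (auto simp: TM_def intro!: fvs.span_base image_eqI[of _ _ 0])
next
  case (Suc k)
  obtain i b where ab: "a = b + Poly_Mapping.single i 1" and bk: "mdeg b = k"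
    using mdeg_Suc_decomp[of a k] Suc.hyps(2) by auto
  define F where "F = (\<lambda>t. mon b (\<lambda>j. p j + (\<Sum>i<d. t i * v i j)))"
  have F: "F \<in> fvs.span (TM d k)" using Suc.hyps(1)[of b] bk by (simp add: F_def)
  have Fs: "F \<in> fvs.span (TM d (Suc k))"
    using F fvs.span_mono[OF TM_mono[of k "Suc k" d]] by auto
  have eq: "(\<lambda>t. mon a (\<lambda>j. p j + (\<Sum>i<d. t i * v i j))) =
      (\<lambda>x. p i * F x) + (\<Sum>l<d. (\<lambda>x. v l i * (\<lambda>t. F t * t l) x))"
    unfolding ab mon_add_single
    by (simp add: fun_eq_iff sum_apply_fun F_def algebra_simps sum_distrib_left)
  have "(\<lambda>x. p i * F x) \<in> fvs.span (TM d (Suc k))" using Fs by (rule fvs.span_scale)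
  moreover have "(\<Sum>l<d. (\<lambda>x. v l i * (\<lambda>t. F t * t l) x)) \<in> fvs.span (TM d (Suc k))"
    by (intro fvs.span_sum fvs.span_scale mul_var_span[OF F]) simp
  ultimately show ?case unfolding eq using Suc.hyps(2) by (auto intro: fvs.span_add)
qed



lemma term_order_irrefl: "term_order n ord \<Longrightarrow> a \<in> monoms n \<Longrightarrow> \<not> ord a a"
  unfolding term_order_def by blast
lemma term_order_trans: "term_order n ord \<Longrightarrow> a \<in> monoms n \<Longrightarrow> b \<in> monoms n \<Longrightarrow> c \<in> monoms n \<Longrightarrow> ord a b \<Longrightarrow> ord b c \<Longrightarrow> ord a c"
  unfolding term_order_def by blast
lemma term_order_total: "term_order n ord \<Longrightarrow> a \<in> monoms n \<Longrightarrow> b \<in> monoms n \<Longrightarrow> a \<noteq> b \<Longrightarrow> ord a b \<or> ord b a"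
  unfolding term_order_def by blast

lemma max_exists:
  assumes to: "term_order n ord" and "finite K" "K \<noteq> {}" "K \<subseteq> monoms n"
  shows "\<exists>m\<in>K. \<forall>m'\<in>K. m' \<noteq> m \<longrightarrow> ord m' m"
  using assms(2-4)
proof (induction K rule: finite_ne_induct)
  case (singleton x) then show ?case by simp
next
  case (insert x F)
  then obtain m where m: "m \<in> F" "\<forall>m'\<in>F. m' \<noteq> m \<longrightarrow> ord m' m" by auto
  have xm: "x \<noteq> m" using m insert.hyps by auto
  have mon: "x \<in> monoms n" "m \<in> monoms n" "F \<subseteq> monoms n" using insert.prems m by auto
  show ?case
  proof (cases "ord m x")
    case True
    have "\<forall>m'\<in>insert x F. m' \<noteq> x \<longrightarrow> ord m' x"
    proof (intro ballI impI)
      fix m' assume "m' \<in> insert x F" "m' \<noteq> x"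
      then have m'F: "m' \<in> F" by simp
      show "ord m' x"
      proof (cases "m' = m")
        case True then show ?thesis using \<open>ord m x\<close> by simp
      next
        case False
        then have "ord m' m" using m m'F by blast
        moreover have "m' \<in> monoms n" using mon m'F by blast
        ultimately show ?thesis using term_order_trans[OF to _ mon(2) mon(1)] True by blast
      qed
    qed
    then show ?thesis by blast
  next
    case False
    then have "ord x m" using term_order_total[OF to mon(1) mon(2) xm] by blast
    then show ?thesis using m by blast
  qed
qed

lemma LE_in_keys:
  assumes to: "term_order n ord" and f: "f \<in> polys n" "f \<noteq> 0"
  shows "LE ord f \<in> Poly_Mapping.keys f"
proof -
  have ne: "Poly_Mapping.keys f \<noteq> {}"
    using f(2) by (metis keys_zero poly_mapping_eqI lookup_zero not_in_keys_iff_lookup_eq_zero empty_iff)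
  have sub: "Poly_Mapping.keys f \<subseteq> monoms n" using f(1) by (auto simp: polys_def)
  obtain m where m: "m \<in> Poly_Mapping.keys f" "\<forall>m'\<in>Poly_Mapping.keys f. m' \<noteq> m \<longrightarrow> ord m' m"
    using max_exists[OF to finite_keys ne sub] by blast
  have uniq: "m2 = m" if "m2 \<in> Poly_Mapping.keys f" "\<forall>m'\<in>Poly_Mapping.keys f. m' \<noteq> m2 \<longrightarrow> ord m' m2" for m2
  proof (rule ccontr)
    assume "m2 \<noteq> m"
    then have "ord m2 m" "ord m m2" using m that by auto
    moreover have "m \<in> monoms n" "m2 \<in> monoms n" using sub m that by auto
    ultimately have "ord m m" using term_order_trans[OF to] by blast
    then show False using term_order_irrefl[OF to] \<open>m \<in> monoms n\<close> by blast
  qed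
  have "\<exists>!m. m \<in> Poly_Mapping.keys f \<and> (\<forall>m'\<in>Poly_Mapping.keys f. m' \<noteq> m \<longrightarrow> ord m' m)"
    using m uniq by blast
  then show ?thesis unfolding LE_def by (rule theI'[THEN conjunct1])
qed

definition Hset :: "'s set \<Rightarrow> nat \<Rightarrow> nat \<Rightarrow> ('s \<times> (nat \<Rightarrow> 'k::comm_semiring_1) \<Rightarrow> 'k) set" where
  "Hset P d s = (\<lambda>(S0, b). \<lambda>z. if fst z = S0 then mon b (snd z) else 0) ` (P \<times> Tset {..<d} s)"

lemma lift_span:
  fixes f :: "(nat \<Rightarrow> 'k::field) \<Rightarrow> 'k"
  assumes "f \<in> fvs.span (TM d s)" "S0 \<in> P"
  shows "(\<lambda>z. if fst z = S0 then f (snd z) else 0) \<in> fvs.span (Hset P d s)"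
  using assms(1)
proof (induction rule: fvs.span_induct)
  case base
  show ?case
    by (rule fvs_subspace_lin) (auto simp: fun_eq_iff)
next
  case (step x)
  then obtain b where b: "b \<in> Tset {..<d} s" "x = mon b" by (auto simp: TM_def)
  have "(\<lambda>z. if fst z = S0 then x (snd z) else 0) \<in> Hset P d s"
    unfolding Hset_def using b assms(2) by (auto intro!: image_eqI[of _ _ "(S0, b)"])
  then show ?case by (rule fvs.span_base)
qed

lemma span_bound:
  fixes P :: "(nat \<Rightarrow> 'k::field) set set" and qq :: "(nat \<Rightarrow> 'k) set \<Rightarrow> (nat \<Rightarrow> 'k) \<Rightarrow> (nat \<Rightarrow> 'k)"
  assumes finP: "finite P" and to: "term_order n tord"
    and par: "\<forall>S\<in>P. \<exists>p v. qq S = (\<lambda>t j. p j + (\<Sum>i<d. t i * v i j))"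
    and rng: "\<forall>S\<in>P. S = range (qq S)"
    and finM: "finite M" and MD: "M \<subseteq> Dset n tord (\<Union>P)" and Mdeg: "\<forall>a\<in>M. mdeg a \<le> s"
  shows "card M \<le> card P * card (Tset {..<d} s)"
proof -
  define G where "G a = (\<lambda>z. if fst z \<in> P then mon a (qq (fst z) (snd z)) else (0::'k))" for a
  have finT: "finite (Tset {..<d} s)" using Tset_card[of "{..<d}" s] by simp
  have finH: "finite (Hset P d s :: ((nat \<Rightarrow> 'k) set \<times> (nat \<Rightarrow> 'k) \<Rightarrow> 'k) set)"
    unfolding Hset_def using finP finT by simp
  have cardH: "card (Hset P d s :: ((nat \<Rightarrow> 'k) set \<times> (nat \<Rightarrow> 'k) \<Rightarrow> 'k) set) \<le> card P * card (Tset {..<d} s)"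
    unfolding Hset_def by (rule order_trans[OF card_image_le]) (simp_all add: card_cartesian_product finP finT)
  have Gspan: "G a \<in> fvs.span (Hset P d s)" if a: "a \<in> M" for a
  proof -
    have eq: "G a = (\<Sum>S0\<in>P. (\<lambda>z. if fst z = S0 then (\<lambda>t. mon a (qq S0 t)) (snd z) else 0))"
      by (rule ext) (simp add: sum_apply_fun G_def finP sum.delta')
    show ?thesis unfolding eq
    proof (rule fvs.span_sum)
      fix S0 assume S0: "S0 \<in> P"
      then obtain p v where q: "qq S0 = (\<lambda>t j. p j + (\<Sum>i<d. t i * v i j))" using par by blast
      have "(\<lambda>t. mon a (qq S0 t)) \<in> fvs.span (TM d (mdeg a))"
        unfolding q by (rule mon_param_span)
      then have "(\<lambda>t. mon a (qq S0 t)) \<in> fvs.span (TM d s)"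
        using fvs.span_mono[OF TM_mono[of "mdeg a" s d]] Mdeg a by auto
      then show "(\<lambda>z. if fst z = S0 then (\<lambda>t. mon a (qq S0 t)) (snd z) else 0) \<in> fvs.span (Hset P d s)"
        using S0 by (rule lift_span)
    qed
  qed
  have indep0: "\<forall>a\<in>M. c a = 0" if h: "\<forall>z. (\<Sum>a\<in>M. c a * G a z) = 0" for c
  proof -
    define f :: "'k mpoly" where "f = Abs_poly_mapping (\<lambda>a. if a \<in> M then c a else 0)"
    have finsupp: "finite {a. (if a \<in> M then c a else 0) \<noteq> 0}"
      using finM by (rule rev_finite_subset) auto
    have lf: "Poly_Mapping.lookup f = (\<lambda>a. if a \<in> M then c a else 0)"
      unfolding f_def using finsupp by simp
    have kf: "Poly_Mapping.keys f \<subseteq> M" by (auto simp: in_keys_iff lf split: if_splits)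
    have Mmon: "M \<subseteq> monoms n" using MD by (auto simp: Dset_def)
    have fpoly: "f \<in> polys n" using kf Mmon by (auto simp: polys_def)
    have evalf: "eval f x = (\<Sum>a\<in>M. c a * mon a x)" for x
    proof -
      have "eval f x = (\<Sum>a\<in>M. Poly_Mapping.lookup f a * mon a x)"
        unfolding eval_mon by (rule sum.mono_neutral_left) (use finM kf in \<open>auto simp: in_keys_iff\<close>)
      then show ?thesis by (simp add: lf)
    qed
    have van: "f \<in> vanishing_ideal n (\<Union>P)"
      unfolding vanishing_ideal_def
    proof (intro CollectI conjI ballI)
      show "f \<in> polys n" by (fact fpoly)
    next
      fix x assume "x \<in> \<Union>P"
      then obtain S where S: "S \<in> P" "x \<in> S" by blast
      then obtain t where x: "x = qq S t" using rng by blast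
      have "(\<Sum>a\<in>M. c a * G a (S, t)) = 0" using h by blast
      then show "eval f x = 0" unfolding evalf using S by (simp add: G_def x)
    qed
    have "f = 0"
    proof (rule ccontr)
      assume "f \<noteq> 0"
      then have "LE tord f \<in> Poly_Mapping.keys f" using LE_in_keys[OF to fpoly] by blast
      moreover have "LE tord f \<in> Cset n tord (\<Union>P)" unfolding Cset_def using van \<open>f \<noteq> 0\<close> by blast
      ultimately show False using kf MD by (auto simp: Dset_def)
    qed
    then show ?thesis using lf by (metis lookup_zero)
  qed
  have inj: "inj_on G M"
  proof (rule inj_onI)
    fix a b assume ab: "a \<in> M" "b \<in> M" "G a = G b"
    show "a = b"
    proof (rule ccontr)
      assume ne: "a \<noteq> b"
      define c where "c x = (if x = a then 1 else if x = b then -1 else (0::'k))" for x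
      have "\<forall>z. (\<Sum>x\<in>M. c x * G x z) = 0"
      proof
        fix z
        have "(\<Sum>x\<in>M. c x * G x z) = (\<Sum>x\<in>M. (if x = a then G a z else 0) - (if x = b then G b z else 0))"
          by (rule sum.cong) (auto simp: c_def ne)
        also have "\<dots> = 0" using ab finM by (simp add: sum_subtractf)
        finally show "(\<Sum>x\<in>M. c x * G x z) = 0" .
      qed
      then have "c a = 0" using indep0 ab(1) by blast
      then show False by (simp add: c_def)
    qed
  qed
  have ind: "fvs.independent (G ` M)"
  proof (rule fvs.independent_if_scalars_zero)
    show "finite (G ` M)" using finM by simp
  next
    fix f x assume sum0: "(\<Sum>y\<in>G ` M. (\<lambda>z. f y * y z)) = 0" and x: "x \<in> G ` M"
    have "(\<Sum>y\<in>G ` M. (\<lambda>z. f y * y z)) = (\<Sum>a\<in>M. (\<lambda>z. f (G a) * G a z))"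
      using inj by (simp add: sum.reindex)
    then have "\<forall>z. (\<Sum>a\<in>M. f (G a) * G a z) = 0"
      using sum0 by (simp add: fun_eq_iff sum_apply_fun)
    then have "\<forall>a\<in>M. f (G a) = 0" by (rule indep0)
    then show "f x = 0" using x by blast
  qed
  have "G ` M \<subseteq> fvs.span (Hset P d s)" using Gspan by blast
  then have "card (G ` M) \<le> card (Hset P d s :: ((nat \<Rightarrow> 'k) set \<times> (nat \<Rightarrow> 'k) \<Rightarrow> 'k) set)"
    using fvs.independent_span_bound[OF finH ind] by blast
  moreover have "card (G ` M) = card M" using inj by (rule card_image)
  ultimately show ?thesis using cardH by linarith
qed



lemma mdeg_sum: "mdeg (sum f A) = (\<Sum>x\<in>A. mdeg (f x))"
  by (induction A rule: infinite_finite_induct) (auto simp: mdeg_add)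

lemma lookup_shift: "finite J \<Longrightarrow> Poly_Mapping.lookup (\<Sum>j\<in>J. Poly_Mapping.single j K) i = (if i \<in> J then K else 0)"
  by (simp add: lookup_sum lookup_single when_def)

lemma planes_bound:
  fixes P :: "(nat \<Rightarrow> 'k::field) set set" and qq :: "(nat \<Rightarrow> 'k) set \<Rightarrow> (nat \<Rightarrow> 'k) \<Rightarrow> (nat \<Rightarrow> 'k)"
  assumes finP: "finite P" and to: "term_order n tord"
    and par: "\<forall>S\<in>P. \<exists>p v. qq S = (\<lambda>t j. p j + (\<Sum>i<d. t i * v i j))"
    and rng: "\<forall>S\<in>P. S = range (qq S)"
    and finQ: "finite QQ" and QQ: "\<forall>Q\<in>QQ. \<exists>J. is_dplane_in n d (Dset n tord (\<Union>P)) J Q"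
  shows "card QQ \<le> card P"
proof (rule ccontr)
  assume "\<not> ?thesis"
  then have big: "Suc (card P) \<le> card QQ" by simp
  let ?D = "Dset n tord (\<Union>P)"
  define Pr where "Pr Q x \<longleftrightarrow> fst x \<subseteq> {..<n} \<and> card (fst x) = d \<and> Q \<subseteq> ?D \<and> snd x \<in> monoms n \<and>
      (\<forall>j\<in>fst x. Poly_Mapping.lookup (snd x) j = 0) \<and> Q = {snd x + m | m. Poly_Mapping.keys m \<subseteq> fst x}" for Q x
  have "\<forall>Q\<in>QQ. \<exists>x. Pr Q x"
  proof
    fix Q assume "Q \<in> QQ"
    then obtain J where "is_dplane_in n d ?D J Q" using QQ by blast
    then have "J \<subseteq> {..<n} \<and> card J = d \<and> Q \<subseteq> ?D \<and>
     (\<exists>\<gamma>\<in>monoms n. (\<forall>j\<in>J. Poly_Mapping.lookup \<gamma> j = 0) \<and> Q = {\<gamma> + m | m. Poly_Mapping.keys m \<subseteq> J})"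
      unfolding is_dplane_in_def .
    then obtain \<gamma> where h: "J \<subseteq> {..<n} \<and> card J = d \<and> Q \<subseteq> ?D \<and> \<gamma> \<in> monoms n \<and>
      (\<forall>j\<in>J. Poly_Mapping.lookup \<gamma> j = 0) \<and> Q = {\<gamma> + m | m. Poly_Mapping.keys m \<subseteq> J}"
      by blast
    show "\<exists>x. Pr Q x"
      by (rule exI[of _ "(J, \<gamma>)"], unfold Pr_def fst_conv snd_conv, rule h)
  qed
  then have "\<exists>f. \<forall>Q\<in>QQ. Pr Q (f Q)" by (rule bchoice)
  then obtain f where f0: "\<forall>Q\<in>QQ. Pr Q (f Q)" by blast
  note f = f0[unfolded Pr_def]
  define J where "J Q = fst (f Q)" for Q
  define \<gamma> where "\<gamma> Q = snd (f Q)" for Q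
  have Jn: "J Q \<subseteq> {..<n}" and Jd: "card (J Q) = d" and QD: "Q \<subseteq> ?D"
    and \<gamma>0: "\<forall>j\<in>J Q. Poly_Mapping.lookup (\<gamma> Q) j = 0"
    and Qeq: "Q = {\<gamma> Q + m | m. Poly_Mapping.keys m \<subseteq> J Q}" if "Q \<in> QQ" for Q
    using f that unfolding J_def \<gamma>_def by blast+
  have finJ: "finite (J Q)" if "Q \<in> QQ" for Q using Jn[OF that] finite_subset by blast
  define S0 where "S0 = (\<Sum>Q\<in>QQ. mdeg (\<gamma> Q))"
  define K where "K = Suc S0"
  define sh where "sh Q = (\<Sum>j\<in>J Q. Poly_Mapping.single j K)" for Q
  define \<gamma>' where "\<gamma>' Q = \<gamma> Q + sh Q" for Q
  define G where "G = S0 + K * d"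
  have lsh: "Poly_Mapping.lookup (sh Q) i = (if i \<in> J Q then K else 0)" if "Q \<in> QQ" for Q i
    unfolding sh_def using finJ[OF that] by (rule lookup_shift)
  have ksh: "Poly_Mapping.keys (sh Q) \<subseteq> J Q" if "Q \<in> QQ" for Q
    using lsh[OF that] by (auto simp: in_keys_iff split: if_splits)
  have \<gamma>K: "Poly_Mapping.lookup (\<gamma> Q) i < K" if "Q \<in> QQ" for Q i
  proof -
    have "Poly_Mapping.lookup (\<gamma> Q) i \<le> mdeg (\<gamma> Q)" by (rule lookup_le_mdeg)
    also have "\<dots> \<le> S0" unfolding S0_def using finQ that by (intro member_le_sum) auto
    finally show ?thesis by (simp add: K_def)
  qed
  have dg: "mdeg (\<gamma>' Q) \<le> G" if "Q \<in> QQ" for Q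
  proof -
    have "mdeg (sh Q) = K * d" using Jd[OF that] by (simp add: sh_def mdeg_sum)
    moreover have "mdeg (\<gamma> Q) \<le> S0" unfolding S0_def using finQ that by (intro member_le_sum) auto
    ultimately show ?thesis by (simp add: \<gamma>'_def mdeg_add G_def)
  qed
  define p where "p = card P"
  define s where "s = Suc p * G * d + G"
  have sG: "G \<le> s" and ineq: "p * ((s + d) choose d) < Suc p * ((s - G + d) choose d)"
    using arith_key[where p=p and G=G and d=d] unfolding s_def by auto
  define Piece where "Piece Q = (\<lambda>m. \<gamma>' Q + m) ` Tset (J Q) (s - mdeg (\<gamma>' Q))" for Q
  define M where "M = (\<Union>Q\<in>QQ. Piece Q)"
  have finPiece: "finite (Piece Q)" if "Q \<in> QQ" for Q
    unfolding Piece_def using Tset_card[OF finJ[OF that]] by blast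
  have cardPiece: "card (Piece Q) = (s - mdeg (\<gamma>' Q) + d) choose d" if "Q \<in> QQ" for Q
  proof -
    have "card (Piece Q) = card (Tset (J Q) (s - mdeg (\<gamma>' Q)))"
      unfolding Piece_def by (rule card_image) (simp add: inj_on_def)
    then show ?thesis using Tset_card[OF finJ[OF that]] Jd[OF that] by simp
  qed
  have pieceB: "(s - G + d) choose d \<le> card (Piece Q)" if "Q \<in> QQ" for Q
    unfolding cardPiece[OF that] using dg[OF that] by (intro binomial_right_mono) simp
  have inPiece: "\<exists>m. \<alpha> = \<gamma>' Q + m \<and> Poly_Mapping.keys m \<subseteq> J Q \<and> mdeg m \<le> s - mdeg (\<gamma>' Q)"
    if "\<alpha> \<in> Piece Q" for \<alpha> Q
    using that unfolding Piece_def Tset_def by blast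
  have lookPiece: "Poly_Mapping.lookup \<alpha> l = Poly_Mapping.lookup (\<gamma> Q) l + (if l \<in> J Q then K else 0) + Poly_Mapping.lookup m l"
    if "Q \<in> QQ" "\<alpha> = \<gamma>' Q + m" for \<alpha> Q m l
    using that by (simp add: \<gamma>'_def lookup_add lsh)
  have asym: False if h: "Q1 \<in> QQ" "Q2 \<in> QQ" "\<alpha> \<in> Piece Q1" "\<alpha> \<in> Piece Q2" "l \<in> J Q1" "l \<notin> J Q2" for Q1 Q2 \<alpha> l
  proof -
    obtain m1 where m1: "\<alpha> = \<gamma>' Q1 + m1" using inPiece[OF h(3)] by blast
    obtain m2 where m2: "\<alpha> = \<gamma>' Q2 + m2" "Poly_Mapping.keys m2 \<subseteq> J Q2" using inPiece[OF h(4)] by blast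
    have "Poly_Mapping.lookup m2 l = 0" using m2(2) h(6) by (auto simp: in_keys_iff)
    then have "Poly_Mapping.lookup \<alpha> l = Poly_Mapping.lookup (\<gamma> Q2) l"
      using lookPiece[OF h(2) m2(1)] h(6) by simp
    moreover have "Poly_Mapping.lookup \<alpha> l \<ge> K"
      using lookPiece[OF h(1) m1] h(5) by simp
    ultimately show False using \<gamma>K[OF h(2), of l] by simp
  qed
  have disj: "Piece Q1 \<inter> Piece Q2 = {}" if h: "Q1 \<in> QQ" "Q2 \<in> QQ" "Q1 \<noteq> Q2" for Q1 Q2
  proof (rule ccontr)
    assume "Piece Q1 \<inter> Piece Q2 \<noteq> {}"
    then obtain \<alpha> where a1: "\<alpha> \<in> Piece Q1" and a2: "\<alpha> \<in> Piece Q2" by blast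
    show False
    proof (cases "J Q1 = J Q2")
      case True
      obtain m1 where m1: "\<alpha> = \<gamma>' Q1 + m1" "Poly_Mapping.keys m1 \<subseteq> J Q1" using inPiece[OF a1] by blast
      obtain m2 where m2: "\<alpha> = \<gamma>' Q2 + m2" "Poly_Mapping.keys m2 \<subseteq> J Q2" using inPiece[OF a2] by blast
      have "\<gamma> Q1 = \<gamma> Q2"
      proof (rule poly_mapping_eqI)
        fix l
        show "Poly_Mapping.lookup (\<gamma> Q1) l = Poly_Mapping.lookup (\<gamma> Q2) l"
        proof (cases "l \<in> J Q1")
          case True
          then show ?thesis using \<gamma>0[OF h(1)] \<gamma>0[OF h(2)] \<open>J Q1 = J Q2\<close> by simp
        next
          case False
          have "Poly_Mapping.lookup m1 l = 0" "Poly_Mapping.lookup m2 l = 0"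
            using m1(2) m2(2) False \<open>J Q1 = J Q2\<close> by (auto simp: in_keys_iff)
          then show ?thesis using lookPiece[OF h(1) m1(1), of l] lookPiece[OF h(2) m2(1), of l] False \<open>J Q1 = J Q2\<close>
            by simp
        qed
      qed
      then have "Q1 = Q2" using Qeq[OF h(1)] Qeq[OF h(2)] True by simp
      then show False using h(3) by simp
    next
      case False
      have "\<not> J Q1 \<subseteq> J Q2 \<or> \<not> J Q2 \<subseteq> J Q1"
      proof (rule ccontr)
        assume "\<not> ?thesis"
        then have "J Q1 = J Q2" by blast
        then show False using False by simp
      qed
      then show False
        using asym[OF h(1) h(2) a1 a2] asym[OF h(2) h(1) a2 a1] by blast
    qed
  qed
  have finM: "finite M" unfolding M_def using finQ finPiece by blast
  have MD: "M \<subseteq> ?D"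
  proof
    fix \<alpha> assume "\<alpha> \<in> M"
    then obtain Q where Q: "Q \<in> QQ" "\<alpha> \<in> Piece Q" unfolding M_def by blast
    then obtain m where m: "\<alpha> = \<gamma>' Q + m" "Poly_Mapping.keys m \<subseteq> J Q" using inPiece by blast
    have "\<alpha> = \<gamma> Q + (sh Q + m)" using m(1) by (simp add: \<gamma>'_def add.assoc)
    moreover have "Poly_Mapping.keys (sh Q + m) \<subseteq> J Q"
      using ksh[OF Q(1)] m(2) keys_add[of "sh Q" m] by blast
    ultimately have "\<alpha> \<in> Q" using Qeq[OF Q(1)] by blast
    then show "\<alpha> \<in> ?D" using QD[OF Q(1)] by blast
  qed
  have Mdeg: "\<forall>a\<in>M. mdeg a \<le> s"
  proof
    fix \<alpha> assume "\<alpha> \<in> M"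
    then obtain Q where Q: "Q \<in> QQ" "\<alpha> \<in> Piece Q" unfolding M_def by blast
    then obtain m where m: "\<alpha> = \<gamma>' Q + m" "mdeg m \<le> s - mdeg (\<gamma>' Q)" using inPiece by blast
    show "mdeg \<alpha> \<le> s" using m dg[OF Q(1)] sG by (simp add: mdeg_add)
  qed
  have "card M = (\<Sum>Q\<in>QQ. card (Piece Q))"
    unfolding M_def using finQ finPiece disj by (intro card_UN_disjoint) auto
  also have "\<dots> \<ge> (\<Sum>Q\<in>QQ. (s - G + d) choose d)" using pieceB by (intro sum_mono) auto
  finally have "card QQ * ((s - G + d) choose d) \<le> card M" by simp
  moreover have "card M \<le> card P * ((s + d) choose d)"
    using span_bound[OF finP to par rng finM MD Mdeg] Tset_card[of "{..<d}" s] by simp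
  moreover have "Suc p * ((s - G + d) choose d) \<le> card QQ * ((s - G + d) choose d)"
    using big unfolding p_def by (rule mult_le_mono1)
  ultimately show False using ineq unfolding p_def by linarith
qed



lemma Dset_mono: "A \<subseteq> B \<Longrightarrow> Dset n ord A \<subseteq> Dset n ord B"
  unfolding Dset_def Cset_def vanishing_ideal_def by blast

lemma dplane_mono: "is_dplane_in n d \<delta> J Q \<Longrightarrow> \<delta> \<subseteq> \<delta>' \<Longrightarrow> is_dplane_in n d \<delta>' J Q"
  unfolding is_dplane_in_def by blast

lemma dplane_dir:
  assumes "is_dplane_in n d \<delta> J Q"
  shows "J = {j. \<exists>a\<in>Q. \<exists>b\<in>Q. Poly_Mapping.lookup a j \<noteq> Poly_Mapping.lookup b j}"
proof -
  obtain \<gamma> where \<gamma>0: "\<forall>j\<in>J. Poly_Mapping.lookup \<gamma> j = 0" and Q: "Q = {\<gamma> + m | m. Poly_Mapping.keys m \<subseteq> J}"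
    using assms unfolding is_dplane_in_def by blast
  show ?thesis
  proof (intro equalityI subsetI)
    fix j assume j: "j \<in> J"
    have "\<gamma> + 0 \<in> Q" using Q by force
    moreover have "\<gamma> + Poly_Mapping.single j 1 \<in> Q" using Q j by force
    moreover have "Poly_Mapping.lookup (\<gamma> + 0) j \<noteq> Poly_Mapping.lookup (\<gamma> + Poly_Mapping.single j 1) j"
      by (simp add: lookup_add)
    ultimately show "j \<in> {j. \<exists>a\<in>Q. \<exists>b\<in>Q. Poly_Mapping.lookup a j \<noteq> Poly_Mapping.lookup b j}" by blast
  next
    fix j assume "j \<in> {j. \<exists>a\<in>Q. \<exists>b\<in>Q. Poly_Mapping.lookup a j \<noteq> Poly_Mapping.lookup b j}"
    then obtain a b where ab: "a \<in> Q" "b \<in> Q" "Poly_Mapping.lookup a j \<noteq> Poly_Mapping.lookup b j" by blast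
    show "j \<in> J"
    proof (rule ccontr)
      assume nj: "j \<notin> J"
      have "Poly_Mapping.lookup x j = Poly_Mapping.lookup \<gamma> j" if xQ: "x \<in> Q" for x
      proof -
        obtain m where "x = \<gamma> + m" "Poly_Mapping.keys m \<subseteq> J" using xQ Q by blast
        then show ?thesis using nj by (auto simp: lookup_add in_keys_iff)
      qed
      then show False using ab by simp
    qed
  qed
qed

lemma dplane_dir_unique:
  assumes "is_dplane_in n d \<delta> J Q" "is_dplane_in n d \<delta>' J' Q"
  shows "J = J'"
  using dplane_dir[OF assms(1)] dplane_dir[OF assms(2)] by simp

theorem mainTheorem3:
  fixes n d :: nat
    and tord :: "mono \<Rightarrow> mono \<Rightarrow> bool"
    and \<P> :: "(nat \<Rightarrow> 'k::field) set set"
  assumes inf: "infinite (UNIV :: 'k set)"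
    and tord_ok: "term_order n tord"
    and var_ord: "\<forall>i j. i < j \<and> j < n \<longrightarrow> tord (Poly_Mapping.single i 1) (Poly_Mapping.single j 1)"
    and fin: "finite \<P>"
    and planes: "\<forall>S\<in>\<P>. affine_dplane n d S"
    and hyp: "\<forall>J. J \<subseteq> {..<n} \<and> card J = d \<longrightarrow>
       (let AJ = \<Union>{S\<in>\<P>. minimal_free_vars n d S J};
            mJ = card {S\<in>\<P>. minimal_free_vars n d S J}
        in (\<forall>J' P. is_dplane_in n d (Dset n tord AJ) J' P \<longrightarrow> J' = J) \<and>
           card {P. \<exists>J'. is_dplane_in n d (Dset n tord AJ) J' P} = mJ)"
  shows "(Eset n d (Dset n tord (\<Union>\<P>)) =
           (\<Union>J\<in>{J. J \<subseteq> {..<n} \<and> card J = d}.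
              Eset n d (Dset n tord (\<Union>{S\<in>\<P>. minimal_free_vars n d S J})))) \<and>
         (\<forall>J. J \<subseteq> {..<n} \<and> card J = d \<longrightarrow>
           card {P. is_dplane_in n d (Dset n tord (\<Union>\<P>)) J P} =
           card {S\<in>\<P>. minimal_free_vars n d S J})"
proof -
  define D where "D = Dset n tord (\<Union>\<P>)"
  define JS where "JS = {J. J \<subseteq> {..<n} \<and> card J = d}"
  define AJ where "AJ J = \<Union>{S\<in>\<P>. minimal_free_vars n d S J}" for J
  define DJ where "DJ J = Dset n tord (AJ J)" for J
  define PJ where "PJ J = {P. \<exists>J'. is_dplane_in n d (DJ J) J' P}" for J
  define PP where "PP = {P. \<exists>J. is_dplane_in n d D J P}"
  define mJ where "mJ J = card {S\<in>\<P>. minimal_free_vars n d S J}" for J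
  have hypJ: "(\<forall>J' Q. is_dplane_in n d (DJ J) J' Q \<longrightarrow> J' = J) \<and> card (PJ J) = mJ J" if hh: "J \<in> JS" for J
  proof -
    have h: "J \<subseteq> {..<n} \<and> card J = d" using hh unfolding JS_def by simp
    show ?thesis unfolding DJ_def AJ_def PJ_def mJ_def using hyp[rule_format, OF h] unfolding Let_def .
  qed
  define qq :: "(nat \<Rightarrow> 'k) set \<Rightarrow> (nat \<Rightarrow> 'k) \<Rightarrow> (nat \<Rightarrow> 'k)" where "qq S = (SOME q. (\<exists>p v. q = (\<lambda>t j. p j + (\<Sum>i<d. t i * v i j))) \<and> S = range q)" for S
  have qq: "(\<exists>p v. qq S = (\<lambda>t j. p j + (\<Sum>i<d. t i * v i j))) \<and> S = range (qq S)" if hh: "S \<in> \<P>" for S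
  proof -
    from planes hh have "affine_dplane n d S" by blast
    then obtain p v where "S = {(\<lambda>j. p j + (\<Sum>i<d. t i * v i j)) | t. True}"
      unfolding affine_dplane_def by (elim exE conjE) blast
    then have "S = range (\<lambda>t j. p j + (\<Sum>i<d. t i * v i j))" by auto
    then have "\<exists>q. (\<exists>p v. q = (\<lambda>t j. p j + (\<Sum>i<d. t i * v i j))) \<and> S = range q" by blast
    then show ?thesis unfolding qq_def by (rule someI_ex)
  qed
  have par: "\<forall>S\<in>\<P>. \<exists>p v. qq S = (\<lambda>t j. p j + (\<Sum>i<d. t i * v i j))" using qq by blast
  have rng: "\<forall>S\<in>\<P>. S = range (qq S)" using qq by blast
  have bound: "card QQ \<le> card \<P>" if hh: "finite QQ" "QQ \<subseteq> PP" for QQ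
  proof (rule planes_bound[OF fin tord_ok par rng hh(1)])
    show "\<forall>Q\<in>QQ. \<exists>J. is_dplane_in n d (Dset n tord (\<Union>\<P>)) J Q" using hh(2) unfolding PP_def D_def by blast
  qed
  have finPP: "finite PP"
  proof (rule ccontr)
    assume "infinite PP"
    then obtain QQ where "finite QQ" "card QQ = Suc (card \<P>)" "QQ \<subseteq> PP"
      using infinite_arbitrarily_large by blast
    then show False using bound by fastforce
  qed
  have cardPP: "card PP \<le> card \<P>" using bound[OF finPP] by simp
  have DJsub: "DJ J \<subseteq> D" for J unfolding DJ_def D_def AJ_def by (rule Dset_mono) blast
  have PJsub: "PJ J \<subseteq> PP" for J
    unfolding PJ_def PP_def using dplane_mono[OF _ DJsub] by blast
  have PJdir: "is_dplane_in n d (DJ J) J Q" if hh: "J \<in> JS" "Q \<in> PJ J" for J Q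
  proof -
    obtain J' where J': "is_dplane_in n d (DJ J) J' Q" using hh(2) unfolding PJ_def by blast
    then have "J' = J" using hypJ[OF hh(1)] by blast
    then show ?thesis using J' by simp
  qed
  have finPJ: "finite (PJ J)" for J using finPP PJsub finite_subset by blast
  have finJS: "finite JS" unfolding JS_def by (rule finite_subset[of _ "Pow {..<n}"]) auto
  define U where "U = (\<Union>J\<in>JS. PJ J)"
  have disj: "PJ J1 \<inter> PJ J2 = {}" if hh: "J1 \<in> JS" "J2 \<in> JS" "J1 \<noteq> J2" for J1 J2
  proof (rule ccontr)
    assume "PJ J1 \<inter> PJ J2 \<noteq> {}"
    then obtain Q where "Q \<in> PJ J1" "Q \<in> PJ J2" by blast
    then have "is_dplane_in n d (DJ J1) J1 Q" "is_dplane_in n d (DJ J2) J2 Q" using PJdir hh by auto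
    then have "J1 = J2" by (rule dplane_dir_unique)
    then show False using hh(3) by simp
  qed
  have cardU: "card U = (\<Sum>J\<in>JS. mJ J)"
  proof -
    have "card U = (\<Sum>J\<in>JS. card (PJ J))"
      unfolding U_def using finJS finPJ disj by (intro card_UN_disjoint) auto
    also have "\<dots> = (\<Sum>J\<in>JS. mJ J)" using hypJ by (intro sum.cong) auto
    finally show ?thesis .
  qed
  have Pcov: "\<P> \<subseteq> (\<Union>J\<in>JS. {S\<in>\<P>. minimal_free_vars n d S J})"
  proof
    fix S assume S: "S \<in> \<P>"
    then obtain J where J: "minimal_free_vars n d S J"
      using minimal_free_vars_exist planes by blast
    then have "J \<in> JS" unfolding JS_def minimal_free_vars_def free_vars_def by blast
    then show "S \<in> (\<Union>J\<in>JS. {S\<in>\<P>. minimal_free_vars n d S J})" using S J by blast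
  qed
  have "card \<P> \<le> card (\<Union>J\<in>JS. {S\<in>\<P>. minimal_free_vars n d S J})"
    by (rule card_mono) (use fin finJS Pcov in auto)
  also have "\<dots> \<le> (\<Sum>J\<in>JS. mJ J)" unfolding mJ_def using finJS by (rule card_UN_le)
  finally have "card \<P> \<le> card U" using cardU by simp
  then have UPP: "U = PP"
    using card_seteq[OF finPP _ ] cardPP PJsub unfolding U_def by (metis (no_types, lifting) UN_least le_trans)
  have part1: "Eset n d D = (\<Union>J\<in>JS. Eset n d (DJ J))"
  proof -
    have "Eset n d D = \<Union>PP" unfolding Eset_def PP_def ..
    also have "\<dots> = \<Union>U" using UPP by simp
    also have "\<dots> = (\<Union>J\<in>JS. \<Union>(PJ J))" unfolding U_def by blast
    also have "\<dots> = (\<Union>J\<in>JS. Eset n d (DJ J))" unfolding Eset_def PJ_def ..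
    finally show ?thesis .
  qed
  have part2: "card {P. is_dplane_in n d D J P} = mJ J" if hh: "J \<in> JS" for J
  proof -
    have "{P. is_dplane_in n d D J P} = PJ J"
    proof (intro equalityI subsetI)
      fix Q assume "Q \<in> PJ J"
      then have "is_dplane_in n d (DJ J) J Q" using PJdir hh by blast
      then show "Q \<in> {P. is_dplane_in n d D J P}" using dplane_mono[OF _ DJsub] by blast
    next
      fix Q assume Q: "Q \<in> {P. is_dplane_in n d D J P}"
      then have "Q \<in> U" using UPP unfolding PP_def by blast
      then obtain J' where J': "J' \<in> JS" "Q \<in> PJ J'" unfolding U_def by blast
      then have "is_dplane_in n d (DJ J') J' Q" by (rule PJdir)
      then have "J' = J" using Q dplane_dir_unique by blast
      then show "Q \<in> PJ J" using J' by simp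
    qed
    then show ?thesis using hypJ[OF hh] by simp
  qed
  show ?thesis
    using part1 part2 unfolding D_def JS_def DJ_def AJ_def mJ_def by blast
qed


end
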